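(* Let $v_\pm>0$ and $u_->u_+$. For $\epsilon_1,\epsilon_2>0$ let $(u^{\epsilon_1\epsilon_2},v^{\epsilon_1\epsilon_2})(t,x)$ be the two-shock Riemann solution of the perturbed Brio system with data $(u_\pm,v_\pm)$. Then as $\epsilon_1,\epsilon_2\to0$, in the sense of distributions on $\{(t,x):t>0\}$, $$u^{\epsilon_1\epsilon_2}\to u_-+(u_+-u_-)H(x-\sigma t),\qquad v^{\epsilon_1\epsilon_2}\to v_-+(v_+-v_-)H(x-\sigma t)+w(t)\,\delta_S,$$ where $H$ is the Heaviside function, $\sigma=\tfrac12(u_-+u_+)$, $S=\{(t,\sigma t):t\ge0\}$ and $w(t)=\tfrac12(v_-+v_+)(u_--u_+)t$; i.e., for every $\phi\in C_0^\infty$ on $t>0$, $\iint v^{\epsilon_1\epsilon_2}\phi\,dx\,dt\to\iint(v_-+(v_+-v_-)H(x-\sigma t))\phi\,dx\,dt+\int_0^\infty w(t)\phi(t,\sigma t)\,dt$. This limit is the delta-shock solution of the transport equations $u_t+(\tfrac12u^2)_x=0$, $v_t+(uv)_x=0$ with the same Riemann data.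
   Context: Perturbed Brio system: $u_t+(\tfrac12u^2+\tfrac12\epsilon_1v^2)_x=0$, $v_t+(uv-\epsilon_2v)_x=0$, $\epsilon_1,\epsilon_2>0$, $v>0$, with Riemann data $(u_-,v_-)$ for $x<0$, $(u_+,v_+)$ for $x>0$. The two-shock Riemann solution is: $(u_-,v_-)$ for $x/t<\sigma_1$, $(u_*,v_* )$ for $\sigma_1<x/t<\sigma_2$, $(u_+,v_+)$ for $x/t>\sigma_2$, where $v_*>\max(v_-,v_+)$, $u_+<u_*<u_-$, $$u_*=u_-+(v_*-v_-)\frac{\epsilon_2-\sqrt{\epsilon_2^2+4\epsilon_1(v_*+v_-)^2}}{v_*+v_-},\qquad u_+=u_*+(v_+-v_* )\frac{\epsilon_2+\sqrt{\epsilon_2^2+4\epsilon_1(v_*+v_+)^2}}{v_*+v_+},$$ $\sigma_1=u_-+\frac{v_*(u_*-u_-)}{v_*-v_-}-\epsilon_2$, $\sigma_2=u_++\frac{v_*(u_+-u_* )}{v_+-v_*}-\epsilon_2$. The weighted delta function on $S$ is defined by $\langle w\delta_S,\phi\rangle=\int_0^\infty w(t)\phi(t,\sigma t)\,dt$. *)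

theory Defs
  imports "HOL-Analysis.Analysis"
begin

text \<open>Functions of (t,x) in R^2. C^k regularity via iterated partial derivatives.\<close>

fun Ck :: "nat \<Rightarrow> (real \<times> real \<Rightarrow> real) \<Rightarrow> bool" where
  "Ck 0 f = continuous_on UNIV f"
| "Ck (Suc k) f = ((\<forall>z. f differentiable (at z)) \<and>
      Ck k (\<lambda>z. frechet_derivative f (at z) (1, 0)) \<and>
      Ck k (\<lambda>z. frechet_derivative f (at z) (0, 1)))"

definition smooth_fun :: "(real \<times> real \<Rightarrow> real) \<Rightarrow> bool" where
  "smooth_fun f \<longleftrightarrow> (\<forall>k. Ck k f)"

definition test_fun_pos :: "(real \<times> real \<Rightarrow> real) \<Rightarrow> bool" where
  "test_fun_pos \<phi> \<longleftrightarrow> smooth_fun \<phi> \<and> compact (closure {z. \<phi> z \<noteq> 0})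
      \<and> closure {z. \<phi> z \<noteq> 0} \<subseteq> {z. 0 < fst z}"

text \<open>Intermediate state (u_*, v_*) of the two-shock Riemann solution.\<close>
definition two_shock_state ::
  "real \<Rightarrow> real \<Rightarrow> real \<Rightarrow> real \<Rightarrow> real \<Rightarrow> real \<Rightarrow> real \<Rightarrow> real \<Rightarrow> bool" where
  "two_shock_state e1 e2 um vm up vp us vs \<longleftrightarrow>
     vs > max vm vp \<and> up < us \<and> us < um \<and>
     us = um + (vs - vm) * ((e2 - sqrt (e2^2 + 4 * e1 * (vs + vm)^2)) / (vs + vm)) \<and>
     up = us + (vp - vs) * ((e2 + sqrt (e2^2 + 4 * e1 * (vs + vp)^2)) / (vs + vp))"

definition shock1_speed :: "real \<Rightarrow> real \<Rightarrow> real \<Rightarrow> real \<Rightarrow> real \<Rightarrow> real" where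
  "shock1_speed e2 um vm us vs = um + vs * (us - um) / (vs - vm) - e2"

definition shock2_speed :: "real \<Rightarrow> real \<Rightarrow> real \<Rightarrow> real \<Rightarrow> real \<Rightarrow> real" where
  "shock2_speed e2 up vp us vs = up + vs * (up - us) / (vp - vs) - e2"

definition three_state :: "real \<Rightarrow> real \<Rightarrow> real \<Rightarrow> real \<Rightarrow> real \<Rightarrow> real \<times> real \<Rightarrow> real" where
  "three_state a b c s1 s2 z = (let t = fst z; x = snd z in
      if x / t < s1 then a else if x / t < s2 then b else c)"

definition Heaviside :: "real \<Rightarrow> real" where
  "Heaviside y = (if y \<ge> 0 then 1 else 0)"

end

theory Submission
  imports Defs
begin


lemma test_fun_props:
  assumes "test_fun_pos \<phi>"
  obtains T1 T2 X M where "0 < T1" "T1 \<le> T2" "0 \<le> X" "0 \<le> M"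
    "\<And>z. \<phi> z \<noteq> 0 \<Longrightarrow> T1 \<le> fst z \<and> fst z \<le> T2 \<and> \<bar>snd z\<bar> \<le> X"
    "\<And>z. \<bar>\<phi> z\<bar> \<le> M" "continuous_on UNIV \<phi>"
proof -
  have "Ck 0 \<phi>" using assms unfolding test_fun_pos_def smooth_fun_def by blast
  then have cont: "continuous_on UNIV \<phi>" by simp
  define C where "C = closure {z. \<phi> z \<noteq> 0}"
  have cC: "compact C" using assms unfolding test_fun_pos_def C_def by blast
  have pC: "C \<subseteq> {z. 0 < fst z}" using assms unfolding test_fun_pos_def C_def by blast
  have sub: "\<phi> z \<noteq> 0 \<Longrightarrow> z \<in> C" for z unfolding C_def using closure_subset[of "{z. \<phi> z \<noteq> 0}"] by auto
  show ?thesis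
  proof (cases "C = {}")
    case True
    then have "\<phi> z = 0" for z using sub by blast
    then show ?thesis by (intro that[of 1 1 0 0]) (auto simp: cont)
  next
    case False
    have "compact (fst ` C)" by (intro compact_continuous_image continuous_intros cC)
    then obtain t0 where t0: "t0 \<in> fst ` C" "\<forall>t\<in>fst`C. t0 \<le> t"
      using compact_attains_inf False by blast
    have t0p: "t0 > 0" using t0 pC by auto
    obtain B where B: "\<forall>z\<in>C. norm z \<le> B" using compact_imp_bounded[OF cC] bounded_iff by auto
    have "compact (\<phi> ` C)" using compact_continuous_image[OF continuous_on_subset[OF cont] cC] by auto
    then obtain M where M: "\<forall>y\<in>\<phi>`C. norm y \<le> M" using compact_imp_bounded bounded_iff by metis
    show ?thesis
    proof (rule that[of t0 "max t0 B" "max 0 B" "max 0 M"])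
      fix z assume nz: "\<phi> z \<noteq> 0"
      then have zC: "z \<in> C" by (rule sub)
      obtain a b where zab: "z = (a,b)" by (cases z)
      have "norm a \<le> B" "norm b \<le> B" using B zC norm_fst_le[of a b] norm_snd_le[of b a] zab by force+
      then show "t0 \<le> fst z \<and> fst z \<le> max t0 B \<and> \<bar>snd z\<bar> \<le> max 0 B"
        using t0 zC zab by auto
    next
      fix z show "\<bar>\<phi> z\<bar> \<le> max 0 M"
      proof (cases "\<phi> z = 0")
        case False
        then have "z \<in> C" by (rule sub)
        then have "norm (\<phi> z) \<le> M" using M by blast
        then show ?thesis by simp
      qed simp
    qed (use t0p cont in auto)
  qed
qed



lemma integrable_bdd_supp:
  fixes f :: "'a::euclidean_space \<Rightarrow> real"
  assumes meas: "f \<in> borel_measurable lborel" and bd: "\<And>z. \<bar>f z\<bar> \<le> C"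
    and supp: "\<And>z. f z \<noteq> 0 \<Longrightarrow> z \<in> cbox a b"
  shows "integrable lborel f"
proof -
  have i1: "integrable lborel (\<lambda>x. indicator (cbox a b) x * C)"
    by (intro integrable_mult_left integrable_real_indicator emeasure_bounded_finite) auto
  have "AE x in lborel. norm (f x) \<le> norm (indicator (cbox a b) x * C)"
  proof (intro AE_I2)
    fix x show "norm (f x) \<le> norm (indicator (cbox a b) x * C)"
      using bd[of x] supp[of x] by (cases "f x = 0") (auto simp: indicator_def)
  qed
  then show ?thesis using Bochner_Integration.integrable_bound[OF i1 meas] by blast
qed

definition Kf :: "(real \<times> real \<Rightarrow> real) \<Rightarrow> real \<Rightarrow> real" where
  "Kf \<phi> r = (\<integral>t. t * \<phi> (t, t * r) \<partial>lborel)"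

lemma Kf_cont:
  assumes T1: "0 < T1" "T1 \<le> T2" and M: "0 \<le> M"
    and supp: "\<And>z. \<phi> z \<noteq> 0 \<Longrightarrow> T1 \<le> fst z \<and> fst z \<le> T2 \<and> \<bar>snd z\<bar> \<le> X"
    and bd: "\<And>z. \<bar>\<phi> z\<bar> \<le> M" and cont: "continuous_on UNIV \<phi>"
  shows "continuous_on UNIV (Kf \<phi>)"
proof (rule continuous_on_sequentiallyI)
  fix u a assume u: "u \<longlonglongrightarrow> (a::real)"
  have meas[measurable]: "\<phi> \<in> borel_measurable borel" using cont by (rule borel_measurable_continuous_onI)
  have ic: "isCont \<phi> z" for z using cont by (metis continuous_on_eq_continuous_at open_UNIV UNIV_I)
  show "(\<lambda>n. Kf \<phi> (u n)) \<longlonglongrightarrow> Kf \<phi> a"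
    unfolding Kf_def
  proof (rule integral_dominated_convergence[where w="\<lambda>t. indicator {T1..T2} t * (T2 * M)"])
    show "(\<lambda>t. t * \<phi> (t, t * a)) \<in> borel_measurable lborel" by measurable
    show "(\<lambda>t. t * \<phi> (t, t * u i)) \<in> borel_measurable lborel" for i by measurable
    show "integrable lborel (\<lambda>t. indicator {T1..T2} t * (T2 * M))"
      by (intro integrable_mult_left integrable_real_indicator emeasure_bounded_finite) auto
    show "AE x in lborel. (\<lambda>i. x * \<phi> (x, x * u i)) \<longlonglongrightarrow> x * \<phi> (x, x * a)"
    proof (intro AE_I2 tendsto_mult tendsto_const)
      fix x :: real
      have "(\<lambda>i. (x, x * u i)) \<longlonglongrightarrow> (x, x * a)" by (intro tendsto_intros u)
      then show "(\<lambda>i. \<phi> (x, x * u i)) \<longlonglongrightarrow> \<phi> (x, x * a)" by (rule isCont_tendsto_compose[OF ic])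
    qed
    show "AE x in lborel. norm (x * \<phi> (x, x * u i)) \<le> indicator {T1..T2} x * (T2 * M)" for i
    proof (intro AE_I2)
      fix x :: real
      show "norm (x * \<phi> (x, x * u i)) \<le> indicator {T1..T2} x * (T2 * M)"
      proof (cases "\<phi> (x, x * u i) = 0")
        case False
        then have "T1 \<le> x" "x \<le> T2" using supp[of "(x, x * u i)"] by auto
        moreover have "\<bar>\<phi> (x, x * u i)\<bar> \<le> M" by (rule bd)
        ultimately show ?thesis using T1 M
          by (auto simp: indicator_def abs_mult intro!: mult_mono)
      qed (use M T1 in \<open>auto simp: indicator_def\<close>)
    qed
  qed
qed

lemma Kf_supp:
  assumes T1: "0 < T1"
    and supp: "\<And>z. \<phi> z \<noteq> 0 \<Longrightarrow> T1 \<le> fst z \<and> fst z \<le> T2 \<and> \<bar>snd z\<bar> \<le> X"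
  shows "Kf \<phi> r \<noteq> 0 \<Longrightarrow> r \<in> cbox (- (X / T1)) (X / T1)"
proof (rule ccontr)
  assume nz: "Kf \<phi> r \<noteq> 0" and nr: "r \<notin> cbox (- (X / T1)) (X / T1)"
  have "t * \<phi> (t, t * r) = 0" for t
  proof (rule ccontr)
    assume "t * \<phi> (t, t * r) \<noteq> 0"
    then have "\<phi> (t, t*r) \<noteq> 0" by auto
    then have h: "T1 \<le> t" "\<bar>t * r\<bar> \<le> X" using supp[of "(t, t*r)"] by auto
    then have "t > 0" using T1 by auto
    have "T1 * \<bar>r\<bar> \<le> t * \<bar>r\<bar>" using h by (intro mult_right_mono) auto
    also have "\<dots> \<le> X" using h \<open>t>0\<close> by (simp add: abs_mult)
    finally have "\<bar>r\<bar> \<le> X / T1" using T1 by (simp add: field_simps)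
    then show False using nr by auto
  qed
  then have "(\<lambda>t. t * \<phi> (t, t * r)) = (\<lambda>t. 0)" by auto
  then show False using nz by (simp add: Kf_def)
qed



lemma cov:
  assumes T1: "0 < T1" "T1 \<le> T2" and X: "0 \<le> X" and M: "0 \<le> M"
    and supp: "\<And>z. \<phi> z \<noteq> 0 \<Longrightarrow> T1 \<le> fst z \<and> fst z \<le> T2 \<and> \<bar>snd z\<bar> \<le> X"
    and bd: "\<And>z. \<bar>\<phi> z\<bar> \<le> M" and cont: "continuous_on UNIV \<phi>"
    and h[measurable]: "h \<in> borel_measurable borel" and hb: "\<And>r. \<bar>h r\<bar> \<le> B"
  shows "(\<integral>z. h (snd z / fst z) * \<phi> z \<partial>lborel) = (\<integral>r. h r * Kf \<phi> r \<partial>lborel)"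
proof -
  have meas[measurable]: "\<phi> \<in> borel_measurable borel" using cont by (rule borel_measurable_continuous_onI)
  have [measurable]: "fst \<in> borel_measurable (borel::(real\<times>real) measure)"
    "snd \<in> borel_measurable (borel::(real\<times>real) measure)"
    by (intro borel_measurable_continuous_onI continuous_intros)+
  have B: "0 \<le> B" using hb[of 0] by linarith
  define G where "G t r = t * h r * \<phi> (t, t*r)" for t r
  have intF: "integrable (lborel \<Otimes>\<^sub>M lborel) (\<lambda>z. h (snd z / fst z) * \<phi> z)"
    unfolding lborel_prod
  proof (rule integrable_bdd_supp[where C="B*M" and a="(T1, -X)" and b="(T2, X)"])
    show "(\<lambda>z. h (snd z / fst z) * \<phi> z) \<in> borel_measurable lborel"
      unfolding measurable_lborel1 by measurable
    show "\<bar>h (snd z / fst z) * \<phi> z\<bar> \<le> B * M" for z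
      unfolding abs_mult by (intro mult_mono hb bd B) auto
    show "z \<in> cbox (T1, - X) (T2, X)" if "h (snd z / fst z) * \<phi> z \<noteq> 0" for z
      using that supp[of z] by (cases z) (auto simp: cbox_Pair_eq)
  qed
  have intG: "integrable (lborel \<Otimes>\<^sub>M lborel) (case_prod G)"
    unfolding lborel_prod
  proof (rule integrable_bdd_supp[where C="T2*B*M" and a="(T1, -(X/T1))" and b="(T2, X/T1)"])
    show "case_prod G \<in> borel_measurable lborel"
      unfolding G_def measurable_lborel1 by measurable
    show "\<bar>case_prod G z\<bar> \<le> T2 * B * M" for z
    proof (cases z)
      case (Pair t r)
      show ?thesis
      proof (cases "\<phi> (t, t*r) = 0")
        case False
        then have "T1 \<le> t" "t \<le> T2" using supp[of "(t,t*r)"] by auto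
        then have "\<bar>t\<bar> \<le> T2" using T1 by auto
        then have "\<bar>t\<bar> * \<bar>h r\<bar> * \<bar>\<phi> (t,t*r)\<bar> \<le> T2 * B * M"
          by (intro mult_mono hb bd B) (use T1 B M in auto)
        then show ?thesis by (simp add: Pair G_def abs_mult)
      qed (use Pair T1 B M in \<open>auto simp: G_def\<close>)
    qed
    show "z \<in> cbox (T1, -(X/T1)) (T2, X/T1)" if "case_prod G z \<noteq> 0" for z
    proof (cases z)
      case (Pair t r)
      then have "\<phi> (t, t*r) \<noteq> 0" using that by (auto simp: G_def)
      then have h: "T1 \<le> t" "t \<le> T2" "\<bar>t * r\<bar> \<le> X" using supp[of "(t, t*r)"] by auto
      then have "t > 0" using T1 by auto
      have "T1 * \<bar>r\<bar> \<le> t * \<bar>r\<bar>" using h by (intro mult_right_mono) auto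
      also have "\<dots> \<le> X" using h \<open>t>0\<close> by (simp add: abs_mult)
      finally have "\<bar>r\<bar> \<le> X / T1" using T1 by (simp add: field_simps)
      then show ?thesis using Pair h by (auto simp: cbox_Pair_eq)
    qed
  qed
  have "(\<integral>z. h (snd z / fst z) * \<phi> z \<partial>lborel) = (\<integral>t. (\<integral>x. h (x/t) * \<phi> (t,x) \<partial>lborel) \<partial>lborel)"
    using lborel_pair.integral_fst'[OF intF] by (simp add: lborel_prod)
  also have "\<dots> = (\<integral>t. (\<integral>r. G t r \<partial>lborel) \<partial>lborel)"
  proof (rule Bochner_Integration.integral_cong[OF refl])
    fix t :: real
    show "(\<integral>x. h (x/t) * \<phi> (t,x) \<partial>lborel) = (\<integral>r. G t r \<partial>lborel)"
    proof (cases "t > 0")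
      case True
      have "(\<integral>x. h (x/t) * \<phi> (t,x) \<partial>lborel) = \<bar>t\<bar> *\<^sub>R (\<integral>r. h ((0 + t*r)/t) * \<phi> (t, 0 + t*r) \<partial>lborel)"
        by (rule lborel_integral_real_affine) (use True in auto)
      also have "\<dots> = t * (\<integral>r. h r * \<phi> (t, t*r) \<partial>lborel)" using True by simp
      also have "\<dots> = (\<integral>r. t * (h r * \<phi> (t, t*r)) \<partial>lborel)" by simp
      also have "\<dots> = (\<integral>r. G t r \<partial>lborel)" by (simp add: G_def mult.assoc)
      finally show ?thesis .
    next
      case False
      then have z: "\<phi> (t, x) = 0" for x using supp[of "(t,x)"] T1 by auto
      show ?thesis by (simp add: z G_def)
    qed
  qed
  also have "\<dots> = (\<integral>r. (\<integral>t. G t r \<partial>lborel) \<partial>lborel)"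
    using lborel_pair.Fubini_integral[OF intG] by simp
  also have "\<dots> = (\<integral>r. h r * Kf \<phi> r \<partial>lborel)"
  proof (rule Bochner_Integration.integral_cong[OF refl])
    fix r :: real
    have Ge: "G t r = h r * (t * \<phi> (t, t*r))" for t by (simp add: G_def mult_ac)
    have "(\<integral>t. G t r \<partial>lborel) = (\<integral>t. h r * (t * \<phi> (t, t*r)) \<partial>lborel)"
      by (simp only: Ge)
    also have "\<dots> = h r * Kf \<phi> r" by (simp add: Kf_def)
    finally show "(\<integral>t. G t r \<partial>lborel) = h r * Kf \<phi> r" .
  qed
  finally show ?thesis .
qed



definition Qf :: "(real \<Rightarrow> real) \<Rightarrow> real \<Rightarrow> real" where
  "Qf K s = (\<integral>r. indicator {s..} r * K r \<partial>lborel)"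

lemma int_ind:
  assumes "integrable lborel (K::real\<Rightarrow>real)" "A \<in> sets borel"
  shows "integrable lborel (\<lambda>r. indicator A r * K r)"
  using integrable_real_mult_indicator[of A lborel K] assms by (simp add: mult.commute)

lemma Q_diff_eq:
  assumes K: "integrable lborel (K::real\<Rightarrow>real)" and s: "s1 \<le> s2"
  shows "Qf K s1 - Qf K s2 = (\<integral>r. indicator {s1..<s2} r * K r \<partial>lborel)"
proof -
  have "Qf K s1 - Qf K s2 = (\<integral>r. indicator {s1..} r * K r - indicator {s2..} r * K r \<partial>lborel)"
    unfolding Qf_def by (rule Bochner_Integration.integral_diff[symmetric]) (auto intro!: int_ind K)
  also have "\<dots> = (\<integral>r. indicator {s1..<s2} r * K r \<partial>lborel)"
    by (rule Bochner_Integration.integral_cong) (use s in \<open>auto simp: indicator_def\<close>)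
  finally show ?thesis .
qed

lemma Q_diff_bound:
  assumes K: "integrable lborel (K::real\<Rightarrow>real)" and s: "s1 \<le> s2"
    and b: "\<And>r. s1 \<le> r \<Longrightarrow> r \<le> s2 \<Longrightarrow> \<bar>K r - k0\<bar> \<le> \<epsilon>"
  shows "\<bar>Qf K s1 - Qf K s2 - k0 * (s2 - s1)\<bar> \<le> \<epsilon> * (s2 - s1)"
proof -
  have ii: "integrable lborel (\<lambda>r. indicator {s1..<s2} r * (c::real))" for c
    by (intro integrable_mult_left integrable_real_indicator emeasure_bounded_finite) auto
  have ii2: "integrable lborel (\<lambda>r. indicator {s1..<s2} r * K r)"
    by (rule int_ind[OF K]) measurable
  have ic: "(\<integral>r. indicator {s1..<s2} r * (c::real) \<partial>lborel) = c * (s2 - s1)" for c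
    using s by simp
  have "(\<integral>r. indicator {s1..<s2} r * (k0 - \<epsilon>) \<partial>lborel) \<le> (\<integral>r. indicator {s1..<s2} r * K r \<partial>lborel)"
  proof (rule integral_mono[OF ii ii2])
    fix x show "indicator {s1..<s2} x * (k0 - \<epsilon>) \<le> indicator {s1..<s2} x * K x"
      by (cases "s1 \<le> x \<and> x < s2") (use b[of x] in \<open>auto simp: indicator_def abs_le_iff\<close>)
  qed
  moreover have "(\<integral>r. indicator {s1..<s2} r * K r \<partial>lborel) \<le> (\<integral>r. indicator {s1..<s2} r * (k0 + \<epsilon>) \<partial>lborel)"
  proof (rule integral_mono[OF ii2 ii])
    fix x show "indicator {s1..<s2} x * K x \<le> indicator {s1..<s2} x * (k0 + \<epsilon>)"
      by (cases "s1 \<le> x \<and> x < s2") (use b[of x] in \<open>auto simp: indicator_def abs_le_iff\<close>)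
  qed
  ultimately show ?thesis unfolding ic Q_diff_eq[OF K s, symmetric]
    by (simp add: abs_le_iff algebra_simps)
qed

lemma Q_lin:
  assumes K: "integrable lborel (K::real\<Rightarrow>real)"
  shows "(\<integral>r. (a + b * indicator {s..} r + c * indicator {s'..} r) * K r \<partial>lborel)
       = a * (\<integral>r. K r \<partial>lborel) + b * Qf K s + c * Qf K s'"
proof -
  have "(\<integral>r. (a + b * indicator {s..} r + c * indicator {s'..} r) * K r \<partial>lborel)
      = (\<integral>r. a * K r + b * (indicator {s..} r * K r) + c * (indicator {s'..} r * K r) \<partial>lborel)"
    by (simp add: algebra_simps)
  also have "\<dots> = a * (\<integral>r. K r \<partial>lborel) + b * Qf K s + c * Qf K s'"
  proof -
    have i1: "integrable lborel (\<lambda>r. a * K r)" using K by simp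
    have i2: "integrable lborel (\<lambda>r. b * (indicator {s..} r * K r))" using int_ind[OF K, of "{s..}"] by simp
    have i3: "integrable lborel (\<lambda>r. c * (indicator {s'..} r * K r))" using int_ind[OF K, of "{s'..}"] by simp
    show ?thesis unfolding Qf_def
      using Bochner_Integration.integral_add[OF Bochner_Integration.integrable_add[OF i1 i2] i3]
        Bochner_Integration.integral_add[OF i1 i2] by simp
  qed
  finally show ?thesis .
qed



lemma sqrt_sq_mult: "0 \<le> e \<Longrightarrow> 0 \<le> a \<Longrightarrow> sqrt (4 * e * a\<^sup>2) = 2 * sqrt e * a"
proof -
  assume h: "0 \<le> e" "0 \<le> a"
  have "4 * e * a\<^sup>2 = (2 * sqrt e * a)\<^sup>2" using h by (simp add: power_mult_distrib)
  then show ?thesis using h by simp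
qed

lemma canc: "(c::real) \<noteq> 0 \<Longrightarrow> v * (c * Y) / c = v * Y"
  by (simp add: field_simps)

lemma pt:
  fixes e1 e2 um vm up vp us vs :: real
  assumes vm: "vm > 0" and vp: "vp > 0" and e1: "e1 > 0" and e2: "e2 > 0"
    and st: "two_shock_state e1 e2 um vm up vp us vs"
  defines "Sa \<equiv> sqrt (e2\<^sup>2 + 4 * e1 * (vs + vm)\<^sup>2)"
    and "Sb \<equiv> sqrt (e2\<^sup>2 + 4 * e1 * (vs + vp)\<^sup>2)"
    and "ra \<equiv> (vs - vm) / (vs + vm)" and "rb \<equiv> (vs - vp) / (vs + vp)"
  shows "vs > vm" "vs > vp"
    "um - up \<le> 2 * e2 + 8 * sqrt e1 * vs"
    "\<bar>Sa - Sb\<bar> \<le> 2 * sqrt e1 * \<bar>vm - vp\<bar>"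
    "Sa = (um - up + ra * e2 - rb * (e2 - (Sa - Sb))) / (ra + rb)"
    "us = um - ra * (Sa - e2)"
    "shock1_speed e2 um vm us vs = um + vs / (vs + vm) * (e2 - Sa) - e2"
    "shock2_speed e2 up vp us vs = up + vs / (vs + vp) * (e2 + Sb) - e2"
    "vs * (shock2_speed e2 up vp us vs - shock1_speed e2 um vm us vs)
       = vp * (us - up) * (vs / (vs - vp)) + vm * (um - us) * (vs / (vs - vm))"
proof -
  have vsm: "vs > vm" and vsp: "vs > vp" and H1: "us = um + (vs - vm) * ((e2 - Sa) / (vs + vm))"
    and H2: "up = us + (vp - vs) * ((e2 + Sb) / (vs + vp))"
    using st by (auto simp: two_shock_state_def Sa_def Sb_def)
  show "vs > vm" "vs > vp" by fact+
  have a0: "vs + vm > 0" and b0: "vs + vp > 0" using vsm vsp vm vp by auto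
  have SaL: "Sa \<ge> e2" unfolding Sa_def
    using real_sqrt_le_mono[of "e2\<^sup>2" "e2\<^sup>2 + 4 * e1 * (vs + vm)\<^sup>2"] e1 e2 by simp
  have SbL: "Sb \<ge> e2" unfolding Sb_def
    using real_sqrt_le_mono[of "e2\<^sup>2" "e2\<^sup>2 + 4 * e1 * (vs + vp)\<^sup>2"] e1 e2 by simp
  have SaL2: "Sa \<ge> 2 * sqrt e1 * (vs + vm)" unfolding Sa_def
    using real_sqrt_le_mono[of "4 * e1 * (vs + vm)\<^sup>2" "e2\<^sup>2 + 4 * e1 * (vs + vm)\<^sup>2"] e1 a0
      sqrt_sq_mult[of e1 "vs + vm"] by simp
  have SbL2: "Sb \<ge> 2 * sqrt e1 * (vs + vp)" unfolding Sb_def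
    using real_sqrt_le_mono[of "4 * e1 * (vs + vp)\<^sup>2" "e2\<^sup>2 + 4 * e1 * (vs + vp)\<^sup>2"] e1 b0
      sqrt_sq_mult[of e1 "vs + vp"] by simp
  have SaU: "Sa \<le> e2 + 2 * sqrt e1 * (vs + vm)" unfolding Sa_def
    using sqrt_add_le_add_sqrt[of "e2\<^sup>2" "4 * e1 * (vs + vm)\<^sup>2"] e1 e2 a0
      sqrt_sq_mult[of e1 "vs + vm"] by simp
  have SbU: "Sb \<le> e2 + 2 * sqrt e1 * (vs + vp)" unfolding Sb_def
    using sqrt_add_le_add_sqrt[of "e2\<^sup>2" "4 * e1 * (vs + vp)\<^sup>2"] e1 e2 b0
      sqrt_sq_mult[of e1 "vs + vp"] by simp
  have ra0: "0 \<le> ra" "ra \<le> 1" unfolding ra_def using vsm a0 vm by (auto simp: field_simps)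
  have rb0: "0 \<le> rb" "rb \<le> 1" unfolding rb_def using vsp b0 vp by (auto simp: field_simps)
  have Hu: "us = um - ra * (Sa - e2)" unfolding ra_def H1 using a0 by (simp add: field_simps)
  show "us = um - ra * (Sa - e2)" by (rule Hu)
  have Hd: "um - up = ra * (Sa - e2) + rb * (e2 + Sb)"
    using H2 Hu b0 unfolding rb_def by (simp add: field_simps)
  have X1: "ra * (Sa - e2) \<le> 1 * (Sa - e2)" using ra0 SaL by (intro mult_right_mono) auto
  have X2: "rb * (e2 + Sb) \<le> 1 * (e2 + Sb)" using rb0 SbL e2 by (intro mult_right_mono) auto
  have X3: "2 * sqrt e1 * (vs + vm) + 2 * sqrt e1 * (vs + vp) \<le> 8 * sqrt e1 * vs"
  proof -
    have "2 * sqrt e1 * ((vs + vm) + (vs + vp)) \<le> 2 * sqrt e1 * (4 * vs)"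
      using vsm vsp e1 by (intro mult_left_mono) auto
    then show ?thesis by (simp add: algebra_simps)
  qed
  have "um - up \<le> 1 * (Sa - e2) + 1 * (e2 + Sb)" unfolding Hd by (rule add_mono[OF X1 X2])
  also have "\<dots> = Sa + Sb" by simp
  also have "\<dots> \<le> (e2 + 2 * sqrt e1 * (vs + vm)) + (e2 + 2 * sqrt e1 * (vs + vp))"
    by (rule add_mono[OF SaU SbU])
  also have "\<dots> = 2*e2 + (2 * sqrt e1 * (vs + vm) + 2 * sqrt e1 * (vs + vp))" by simp
  also have "\<dots> \<le> 2 * e2 + 8 * sqrt e1 * vs" by (rule add_left_mono[OF X3])
  finally show "um - up \<le> 2 * e2 + 8 * sqrt e1 * vs" .
  have SS: "2 * sqrt e1 * ((vs + vm) + (vs + vp)) \<le> Sa + Sb"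
  proof -
    have "2 * sqrt e1 * ((vs + vm) + (vs + vp)) = 2 * sqrt e1 * (vs + vm) + 2 * sqrt e1 * (vs + vp)"
      by algebra
    then show ?thesis using add_mono[OF SaL2 SbL2] by simp
  qed
  have pos: "Sa + Sb > 0" using SaL SbL e2 by linarith
  have sq: "Sa\<^sup>2 = e2\<^sup>2 + 4 * e1 * (vs + vm)\<^sup>2" "Sb\<^sup>2 = e2\<^sup>2 + 4 * e1 * (vs + vp)\<^sup>2"
    unfolding Sa_def Sb_def using e1 by simp_all
  have se: "(sqrt e1)\<^sup>2 = e1" using e1 by simp
  have "(Sa - Sb) * (Sa + Sb) = 4 * e1 * (vm - vp) * ((vs + vm) + (vs + vp))"
    using sq by (simp add: algebra_simps power2_eq_square)
  note eqS = this
  have "\<bar>Sa - Sb\<bar> * (Sa + Sb) = \<bar>(Sa - Sb) * (Sa + Sb)\<bar>"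
    using pos by (simp add: abs_mult)
  also have "\<dots> = \<bar>4 * e1 * (vm - vp) * ((vs + vm) + (vs + vp))\<bar>"
    by (simp only: eqS)
  also have "\<dots> = 4 * e1 * \<bar>vm - vp\<bar> * ((vs + vm) + (vs + vp))"
    using e1 a0 b0 by (simp add: abs_mult)
  also have "\<dots> = 4 * (sqrt e1 * sqrt e1) * \<bar>vm - vp\<bar> * ((vs + vm) + (vs + vp))"
    using e1 by simp
  also have "\<dots> = (2 * sqrt e1 * \<bar>vm - vp\<bar>) * (2 * sqrt e1 * ((vs + vm) + (vs + vp)))"
    by algebra
  also have "\<dots> \<le> (2 * sqrt e1 * \<bar>vm - vp\<bar>) * (Sa + Sb)"
    by (rule mult_left_mono[OF SS]) (use e1 in auto)
  finally show "\<bar>Sa - Sb\<bar> \<le> 2 * sqrt e1 * \<bar>vm - vp\<bar>" using pos by simp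
  have "ra + rb > 0" unfolding ra_def rb_def using vsm vsp a0 b0 by (auto intro: add_pos_pos)
  then show "Sa = (um - up + ra * e2 - rb * (e2 - (Sa - Sb))) / (ra + rb)"
    using Hd by (simp add: field_simps)
  show "shock1_speed e2 um vm us vs = um + vs / (vs + vm) * (e2 - Sa) - e2"
  proof -
    have e: "us - um = (vs - vm) * ((e2 - Sa) / (vs + vm))" using H1 by simp
    have "vs * (us - um) / (vs - vm) = vs * ((e2 - Sa) / (vs + vm))"
      unfolding e using vsm by (intro canc) simp
    then have "vs * (us - um) / (vs - vm) = vs / (vs + vm) * (e2 - Sa)" by simp
    then show ?thesis unfolding shock1_speed_def by simp
  qed
  show "shock2_speed e2 up vp us vs = up + vs / (vs + vp) * (e2 + Sb) - e2"
  proof -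
    have e: "up - us = (vp - vs) * ((e2 + Sb) / (vs + vp))" using H2 by simp
    have "vs * (up - us) / (vp - vs) = vs * ((e2 + Sb) / (vs + vp))"
      unfolding e using vsp by (intro canc) simp
    then have "vs * (up - us) / (vp - vs) = vs / (vs + vp) * (e2 + Sb)" by simp
    then show ?thesis unfolding shock2_speed_def by simp
  qed
  show "vs * (shock2_speed e2 up vp us vs - shock1_speed e2 um vm us vs)
       = vp * (us - up) * (vs / (vs - vp)) + vm * (um - us) * (vs / (vs - vm))"
  proof -
    have n1: "vs - vm \<noteq> 0" "vs - vp \<noteq> 0" using vsm vsp by auto
    have sw: "vs * (up - us) / (vp - vs) = vs * (us - up) / (vs - vp)"
      by (metis minus_diff_eq mult_minus_right minus_divide_divide)
    show ?thesis unfolding shock1_speed_def shock2_speed_def sw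
      using n1 by (simp add: field_simps)
  qed
qed



lemma frac_aux:
  fixes v c d :: real
  assumes "v > 0" "v + c > 0"
  shows "(1 + d * (1 / v)) / (1 + c * (1 / v)) = (v + d) / (v + c)"
proof -
  have v: "v \<noteq> 0" "v + c \<noteq> 0" using assms by auto
  have e: "1 + d * (1 / v) = (v + d) / v" "1 + c * (1 / v) = (v + c) / v" using v by (simp_all add: field_simps)
  show ?thesis unfolding e using v by simp
qed

lemma ratio_lim:
  fixes vs :: "'a \<Rightarrow> real"
  assumes iv: "((\<lambda>x. 1 / vs x) \<longlongrightarrow> 0) F" and ev: "eventually (\<lambda>x. vs x > 0 \<and> vs x + c > 0) F"
  shows "((\<lambda>x. (vs x + d) / (vs x + c)) \<longlongrightarrow> 1) F"
proof -
  have "((\<lambda>x. (1 + d * (1 / vs x)) / (1 + c * (1 / vs x))) \<longlongrightarrow> (1 + d * 0) / (1 + c * 0)) F"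
    by (intro tendsto_intros iv) simp
  then have l: "((\<lambda>x. (1 + d * (1 / vs x)) / (1 + c * (1 / vs x))) \<longlongrightarrow> 1) F" by simp
  show ?thesis
  proof (rule Lim_transform_eventually[OF l])
    show "\<forall>\<^sub>F x in F. (1 + d * (1 / vs x)) / (1 + c * (1 / vs x)) = (vs x + d) / (vs x + c)"
      using ev
    proof eventually_elim
      case (elim x)
      then show ?case by (intro frac_aux) auto
    qed
  qed
qed

lemma asym:
  fixes e1 e2 us vs :: "'a \<Rightarrow> real"
  assumes vm: "vm > 0" and vp: "vp > 0" and D: "um > up"
    and e1: "(e1 \<longlongrightarrow> 0) F" and e2: "(e2 \<longlongrightarrow> 0) F"
    and ev: "eventually (\<lambda>x. 0 < e1 x \<and> 0 < e2 x \<and> two_shock_state (e1 x) (e2 x) um vm up vp (us x) (vs x)) F"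
  shows "(us \<longlongrightarrow> (um + up) / 2) F"
    "((\<lambda>x. shock1_speed (e2 x) um vm (us x) (vs x)) \<longlongrightarrow> (um + up) / 2) F"
    "((\<lambda>x. shock2_speed (e2 x) up vp (us x) (vs x)) \<longlongrightarrow> (um + up) / 2) F"
    "((\<lambda>x. vs x * (shock2_speed (e2 x) up vp (us x) (vs x) - shock1_speed (e2 x) um vm (us x) (vs x)))
        \<longlongrightarrow> (vm + vp) / 2 * (um - up)) F"
proof -
  define \<Delta> where "\<Delta> = um - up"
  have \<Delta>: "\<Delta> > 0" using D by (simp add: \<Delta>_def)
  define Sa where "Sa x = sqrt ((e2 x)\<^sup>2 + 4 * e1 x * (vs x + vm)\<^sup>2)" for x
  define Sb where "Sb x = sqrt ((e2 x)\<^sup>2 + 4 * e1 x * (vs x + vp)\<^sup>2)" for x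
  define ra where "ra x = (vs x - vm) / (vs x + vm)" for x
  define rb where "rb x = (vs x - vp) / (vs x + vp)" for x
  have P: "\<forall>\<^sub>F x in F. 0 < e1 x \<and> vs x > vm \<and> vs x > vp \<and>
      \<Delta> \<le> 2 * e2 x + 8 * sqrt (e1 x) * vs x \<and>
      \<bar>Sa x - Sb x\<bar> \<le> 2 * sqrt (e1 x) * \<bar>vm - vp\<bar> \<and>
      Sa x = (\<Delta> + ra x * e2 x - rb x * (e2 x - (Sa x - Sb x))) / (ra x + rb x) \<and>
      us x = um - ra x * (Sa x - e2 x) \<and>
      shock1_speed (e2 x) um vm (us x) (vs x) = um + vs x / (vs x + vm) * (e2 x - Sa x) - e2 x \<and>
      shock2_speed (e2 x) up vp (us x) (vs x) = up + vs x / (vs x + vp) * (e2 x + Sb x) - e2 x \<and>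
      vs x * (shock2_speed (e2 x) up vp (us x) (vs x) - shock1_speed (e2 x) um vm (us x) (vs x))
       = vp * (us x - up) * (vs x / (vs x - vp)) + vm * (um - us x) * (vs x / (vs x - vm))"
    using ev
  proof eventually_elim
    case (elim x)
    then have h: "0 < e1 x" "0 < e2 x" "two_shock_state (e1 x) (e2 x) um vm up vp (us x) (vs x)" by auto
    note q = pt[OF vm vp h]
    show ?case using q h(1) unfolding Sa_def Sb_def ra_def rb_def \<Delta>_def by auto
  qed
  have e2ev: "\<forall>\<^sub>F x in F. e2 x < \<Delta> / 4" using order_tendstoD(2)[OF e2, of "\<Delta>/4"] \<Delta> by simp
  have ivb: "\<forall>\<^sub>F x in F. norm (1 / vs x) \<le> 16 * sqrt (e1 x) / \<Delta>"
    using P e2ev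
  proof eventually_elim
    case (elim x)
    then have vs0: "vs x > 0" using vm by auto
    have "8 * sqrt (e1 x) * vs x = 8 * (sqrt (e1 x) * vs x)" by simp
    then have "\<Delta> \<le> 16 * (sqrt (e1 x) * vs x)" using elim by linarith
    then show ?case using vs0 \<Delta> by (simp add: field_simps)
  qed
  have g0: "((\<lambda>x. 16 * sqrt (e1 x) / \<Delta>) \<longlongrightarrow> 0) F"
  proof -
    have "((\<lambda>x. 16 * sqrt (e1 x) / \<Delta>) \<longlongrightarrow> 16 * sqrt 0 / \<Delta>) F"
      by (intro tendsto_intros e1) (use \<Delta> in auto)
    then show ?thesis by simp
  qed
  have iv: "((\<lambda>x. 1 / vs x) \<longlongrightarrow> 0) F" by (rule Lim_null_comparison[OF ivb g0])
  have evs: "\<forall>\<^sub>F x in F. vs x > 0 \<and> vs x + vm > 0 \<and> vs x + vp > 0 \<and> vs x + - vm > 0 \<and> vs x + - vp > 0"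
    using P by eventually_elim (use vm vp in auto)
  have ratio: "((\<lambda>x. (vs x + d) / (vs x + c)) \<longlongrightarrow> 1) F" if "c \<in> {vm, vp, -vm, -vp}" for c d
  proof (rule ratio_lim[OF iv])
    show "\<forall>\<^sub>F x in F. 0 < vs x \<and> 0 < vs x + c"
      using evs
    proof eventually_elim
      case (elim x)
      then show ?case using that by auto
    qed
  qed
  have ra1: "(ra \<longlongrightarrow> 1) F" using ratio[of vm "-vm"] unfolding ra_def by simp
  have rb1: "(rb \<longlongrightarrow> 1) F" using ratio[of vp "-vp"] unfolding rb_def by simp
  have qa1: "((\<lambda>x. vs x / (vs x + vm)) \<longlongrightarrow> 1) F" using ratio[of vm 0] by simp
  have qb1: "((\<lambda>x. vs x / (vs x + vp)) \<longlongrightarrow> 1) F" using ratio[of vp 0] by simp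
  have pa1: "((\<lambda>x. vs x / (vs x - vm)) \<longlongrightarrow> 1) F" using ratio[of "-vm" 0] by simp
  have pb1: "((\<lambda>x. vs x / (vs x - vp)) \<longlongrightarrow> 1) F" using ratio[of "-vp" 0] by simp
  have dlim: "((\<lambda>x. Sa x - Sb x) \<longlongrightarrow> 0) F"
  proof (rule Lim_null_comparison)
    show "\<forall>\<^sub>F x in F. norm (Sa x - Sb x) \<le> 2 * sqrt (e1 x) * \<bar>vm - vp\<bar>"
      using P by eventually_elim auto
    have "((\<lambda>x. 2 * sqrt (e1 x) * \<bar>vm - vp\<bar>) \<longlongrightarrow> 2 * sqrt 0 * \<bar>vm - vp\<bar>) F"
      by (intro tendsto_intros e1)
    then show "((\<lambda>x. 2 * sqrt (e1 x) * \<bar>vm - vp\<bar>) \<longlongrightarrow> 0) F" by simp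
  qed
  have Salim: "(Sa \<longlongrightarrow> \<Delta> / 2) F"
  proof -
    have "((\<lambda>x. (\<Delta> + ra x * e2 x - rb x * (e2 x - (Sa x - Sb x))) / (ra x + rb x))
          \<longlongrightarrow> (\<Delta> + 1 * 0 - 1 * (0 - 0)) / (1 + 1)) F"
      by (intro tendsto_intros ra1 rb1 e2 dlim) simp
    then have l: "((\<lambda>x. (\<Delta> + ra x * e2 x - rb x * (e2 x - (Sa x - Sb x))) / (ra x + rb x))
          \<longlongrightarrow> \<Delta> / 2) F" by simp
    show ?thesis
      by (rule Lim_transform_eventually[OF l]) (use P in \<open>eventually_elim, metis\<close>)
  qed
  have Sblim: "(Sb \<longlongrightarrow> \<Delta> / 2) F"
  proof -
    have "((\<lambda>x. Sa x - (Sa x - Sb x)) \<longlongrightarrow> \<Delta> / 2 - 0) F" by (intro tendsto_intros Salim dlim)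
    then show ?thesis by simp
  qed
  have uslim: "(us \<longlongrightarrow> (um + up) / 2) F"
  proof -
    have "((\<lambda>x. um - ra x * (Sa x - e2 x)) \<longlongrightarrow> um - 1 * (\<Delta> / 2 - 0)) F"
      by (intro tendsto_intros ra1 Salim e2)
    then have l: "((\<lambda>x. um - ra x * (Sa x - e2 x)) \<longlongrightarrow> (um + up) / 2) F"
      by (simp add: \<Delta>_def field_simps)
    show ?thesis
      by (rule Lim_transform_eventually[OF l]) (use P in \<open>eventually_elim, metis\<close>)
  qed
  show "(us \<longlongrightarrow> (um + up) / 2) F" by (rule uslim)
  show "((\<lambda>x. shock1_speed (e2 x) um vm (us x) (vs x)) \<longlongrightarrow> (um + up) / 2) F"
  proof -
    have "((\<lambda>x. um + vs x / (vs x + vm) * (e2 x - Sa x) - e2 x) \<longlongrightarrow> um + 1 * (0 - \<Delta> / 2) - 0) F"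
      by (intro tendsto_intros qa1 Salim e2)
    then have l: "((\<lambda>x. um + vs x / (vs x + vm) * (e2 x - Sa x) - e2 x) \<longlongrightarrow> (um + up) / 2) F"
      by (simp add: \<Delta>_def field_simps)
    show ?thesis
      by (rule Lim_transform_eventually[OF l]) (use P in \<open>eventually_elim, metis\<close>)
  qed
  show "((\<lambda>x. shock2_speed (e2 x) up vp (us x) (vs x)) \<longlongrightarrow> (um + up) / 2) F"
  proof -
    have "((\<lambda>x. up + vs x / (vs x + vp) * (e2 x + Sb x) - e2 x) \<longlongrightarrow> up + 1 * (0 + \<Delta> / 2) - 0) F"
      by (intro tendsto_intros qb1 Sblim e2)
    then have l: "((\<lambda>x. up + vs x / (vs x + vp) * (e2 x + Sb x) - e2 x) \<longlongrightarrow> (um + up) / 2) F"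
      by (simp add: \<Delta>_def field_simps)
    show ?thesis
      by (rule Lim_transform_eventually[OF l]) (use P in \<open>eventually_elim, metis\<close>)
  qed
  show "((\<lambda>x. vs x * (shock2_speed (e2 x) up vp (us x) (vs x) - shock1_speed (e2 x) um vm (us x) (vs x)))
        \<longlongrightarrow> (vm + vp) / 2 * (um - up)) F"
  proof -
    have "((\<lambda>x. vp * (us x - up) * (vs x / (vs x - vp)) + vm * (um - us x) * (vs x / (vs x - vm)))
       \<longlongrightarrow> vp * ((um + up) / 2 - up) * 1 + vm * (um - (um + up) / 2) * 1) F"
      by (intro tendsto_intros uslim pa1 pb1)
    then have l: "((\<lambda>x. vp * (us x - up) * (vs x / (vs x - vp)) + vm * (um - us x) * (vs x / (vs x - vm)))
       \<longlongrightarrow> (vm + vp) / 2 * (um - up)) F"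
      by (rule tendsto_eq_rhs) (simp add: field_simps)
    show ?thesis
      by (rule Lim_transform_eventually[OF l]) (use P in \<open>eventually_elim, metis\<close>)
  qed
qed



lemma K_facts:
  assumes T1: "0 < T1" "T1 \<le> T2" and M: "0 \<le> M"
    and supp: "\<And>z. \<phi> z \<noteq> 0 \<Longrightarrow> T1 \<le> fst z \<and> fst z \<le> T2 \<and> \<bar>snd z\<bar> \<le> X"
    and bd: "\<And>z. \<bar>\<phi> z\<bar> \<le> M" and cont: "continuous_on UNIV \<phi>"
  obtains CK where "continuous_on UNIV (Kf \<phi>)" "integrable lborel (Kf \<phi>)" "\<And>r. \<bar>Kf \<phi> r\<bar> \<le> CK"
proof -
  have c: "continuous_on UNIV (Kf \<phi>)" by (rule Kf_cont[OF T1 M supp bd cont])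
  have s: "Kf \<phi> r \<noteq> 0 \<Longrightarrow> r \<in> cbox (- (X / T1)) (X / T1)" for r by (rule Kf_supp[OF T1(1) supp])
  have "compact (Kf \<phi> ` cbox (- (X / T1)) (X / T1))"
    by (intro compact_continuous_image continuous_on_subset[OF c]) auto
  then obtain C where C: "\<forall>y \<in> Kf \<phi> ` cbox (- (X / T1)) (X / T1). norm y \<le> C"
    using compact_imp_bounded bounded_iff by metis
  have b: "\<bar>Kf \<phi> r\<bar> \<le> max 0 C" for r
  proof (cases "Kf \<phi> r = 0")
    case False
    then have "norm (Kf \<phi> r) \<le> C" using C s by blast
    then show ?thesis by simp
  qed simp
  have m: "Kf \<phi> \<in> borel_measurable lborel"
    unfolding measurable_lborel2 by (rule borel_measurable_continuous_onI[OF c])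
  have "integrable lborel (Kf \<phi>)"
    by (rule integrable_bdd_supp[OF m b s])
  then show ?thesis using that c b by blast
qed

lemma G1:
  assumes T1: "0 < T1" "T1 \<le> T2" and X: "0 \<le> X" and M: "0 \<le> M"
    and supp: "\<And>z. \<phi> z \<noteq> 0 \<Longrightarrow> T1 \<le> fst z \<and> fst z \<le> T2 \<and> \<bar>snd z\<bar> \<le> X"
    and bd: "\<And>z. \<bar>\<phi> z\<bar> \<le> M" and cont: "continuous_on UNIV \<phi>"
    and iK: "integrable lborel (Kf \<phi>)" and s: "s1 \<le> s2"
  shows "(\<integral>z. three_state a b c s1 s2 z * \<phi> z \<partial>lborel)
        = a * (\<integral>r. Kf \<phi> r \<partial>lborel) + (b - a) * Qf (Kf \<phi>) s1 + (c - b) * Qf (Kf \<phi>) s2"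
proof -
  define h where "h r = a + (b - a) * indicator {s1..} r + (c - b) * indicator {s2..} r" for r :: real
  have eq: "three_state a b c s1 s2 z = h (snd z / fst z)" for z
    using s unfolding three_state_def Let_def h_def by (auto simp: indicator_def)
  have hm: "h \<in> borel_measurable borel" unfolding h_def by measurable
  have hb: "\<bar>h r\<bar> \<le> \<bar>a\<bar> + \<bar>b - a\<bar> + \<bar>c - b\<bar>" for r
    unfolding h_def indicator_def by (auto; arith)
  have "(\<integral>z. three_state a b c s1 s2 z * \<phi> z \<partial>lborel) = (\<integral>z. h (snd z / fst z) * \<phi> z \<partial>lborel)"
    by (simp add: eq)
  also have "\<dots> = (\<integral>r. h r * Kf \<phi> r \<partial>lborel)"
    by (rule cov[OF T1 X M supp bd cont hm hb])
  also have "\<dots> = a * (\<integral>r. Kf \<phi> r \<partial>lborel) + (b - a) * Qf (Kf \<phi>) s1 + (c - b) * Qf (Kf \<phi>) s2"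
    unfolding h_def by (rule Q_lin[OF iK])
  finally show ?thesis .
qed

lemma G2:
  assumes T1: "0 < T1" "T1 \<le> T2" and X: "0 \<le> X" and M: "0 \<le> M"
    and supp: "\<And>z. \<phi> z \<noteq> 0 \<Longrightarrow> T1 \<le> fst z \<and> fst z \<le> T2 \<and> \<bar>snd z\<bar> \<le> X"
    and bd: "\<And>z. \<bar>\<phi> z\<bar> \<le> M" and cont: "continuous_on UNIV \<phi>"
    and iK: "integrable lborel (Kf \<phi>)"
  shows "(\<integral>z. (a + (c - a) * Heaviside (snd z - s * fst z)) * \<phi> z \<partial>lborel)
        = a * (\<integral>r. Kf \<phi> r \<partial>lborel) + (c - a) * Qf (Kf \<phi>) s"
proof -
  define h where "h r = a + (c - a) * indicator {s..} r + 0 * indicator {s..} r" for r :: real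
  have eq: "(a + (c - a) * Heaviside (snd z - s * fst z)) * \<phi> z = h (snd z / fst z) * \<phi> z" for z
  proof (cases "\<phi> z = 0")
    case False
    then have t: "fst z > 0" using supp[of z] T1 by auto
    have "(snd z - s * fst z \<ge> 0) = (snd z / fst z \<ge> s)" using t by (simp add: field_simps)
    then show ?thesis unfolding h_def Heaviside_def by (auto simp: indicator_def)
  qed simp
  have hm: "h \<in> borel_measurable borel" unfolding h_def by measurable
  have hb: "\<bar>h r\<bar> \<le> \<bar>a\<bar> + \<bar>c - a\<bar>" for r
    unfolding h_def indicator_def by (auto; arith)
  have "(\<integral>z. (a + (c - a) * Heaviside (snd z - s * fst z)) * \<phi> z \<partial>lborel)
      = (\<integral>z. h (snd z / fst z) * \<phi> z \<partial>lborel)"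
    by (simp only: eq)
  also have "\<dots> = (\<integral>r. h r * Kf \<phi> r \<partial>lborel)"
    by (rule cov[OF T1 X M supp bd cont hm hb])
  also have "\<dots> = a * (\<integral>r. Kf \<phi> r \<partial>lborel) + (c - a) * Qf (Kf \<phi>) s + 0 * Qf (Kf \<phi>) s"
    unfolding h_def by (rule Q_lin[OF iK])
  finally show ?thesis by simp
qed

lemma Q_lip:
  assumes iK: "integrable lborel K" and b: "\<And>r. \<bar>K r\<bar> \<le> CK"
  shows "\<bar>Qf K s - Qf K s'\<bar> \<le> CK * \<bar>s - s'\<bar>"
proof (cases "s \<le> s'")
  case True
  have "\<bar>Qf K s - Qf K s' - 0 * (s' - s)\<bar> \<le> CK * (s' - s)"
    by (rule Q_diff_bound[OF iK True]) (use b in simp)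
  then show ?thesis using True by simp
next
  case False
  then have F: "s' \<le> s" by simp
  have "\<bar>Qf K s' - Qf K s - 0 * (s - s')\<bar> \<le> CK * (s - s')"
    by (rule Q_diff_bound[OF iK F]) (use b in simp)
  then show ?thesis using F by (simp add: abs_minus_commute)
qed

lemma Q_tendsto:
  assumes iK: "integrable lborel K" and b: "\<And>r. \<bar>K r\<bar> \<le> CK" and f: "(f \<longlongrightarrow> \<sigma>) F"
  shows "((\<lambda>x. Qf K (f x)) \<longlongrightarrow> Qf K \<sigma>) F"
proof -
  have "((\<lambda>x. Qf K (f x) - Qf K \<sigma>) \<longlongrightarrow> 0) F"
  proof (rule Lim_null_comparison)
    show "\<forall>\<^sub>F x in F. norm (Qf K (f x) - Qf K \<sigma>) \<le> CK * \<bar>f x - \<sigma>\<bar>"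
      using Q_lip[OF iK b] by auto
    have "((\<lambda>x. CK * \<bar>f x - \<sigma>\<bar>) \<longlongrightarrow> CK * \<bar>\<sigma> - \<sigma>\<bar>) F" by (intro tendsto_intros f)
    then show "((\<lambda>x. CK * \<bar>f x - \<sigma>\<bar>) \<longlongrightarrow> 0) F" by simp
  qed
  then show ?thesis by (rule LIM_zero_cancel)
qed

lemma Dq_lim:
  assumes iK: "integrable lborel K" and cK: "continuous_on UNIV K"
    and s1: "(s1 \<longlongrightarrow> \<sigma>) F" and s2: "(s2 \<longlongrightarrow> \<sigma>) F" and lt: "eventually (\<lambda>x. s1 x < s2 x) F"
  shows "((\<lambda>x. (Qf K (s1 x) - Qf K (s2 x)) / (s2 x - s1 x)) \<longlongrightarrow> K \<sigma>) F"
proof (rule tendstoI)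
  fix \<epsilon> :: real assume e: "\<epsilon> > 0"
  have "isCont K \<sigma>" using cK by (simp add: continuous_on_eq_continuous_at)
  then obtain \<delta> where d: "\<delta> > 0" "\<And>r. dist r \<sigma> < \<delta> \<Longrightarrow> dist (K r) (K \<sigma>) < \<epsilon> / 2"
    using e unfolding continuous_at_eps_delta by (metis half_gt_zero)
  have "eventually (\<lambda>x. dist (s1 x) \<sigma> < \<delta>) F" by (rule tendstoD[OF s1 d(1)])
  moreover have "eventually (\<lambda>x. dist (s2 x) \<sigma> < \<delta>) F" by (rule tendstoD[OF s2 d(1)])
  ultimately show "eventually (\<lambda>x. dist ((Qf K (s1 x) - Qf K (s2 x)) / (s2 x - s1 x)) (K \<sigma>) < \<epsilon>) F"
    using lt
  proof eventually_elim
    case (elim x)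
    have bd: "\<bar>K r - K \<sigma>\<bar> \<le> \<epsilon> / 2" if "s1 x \<le> r" "r \<le> s2 x" for r
    proof -
      have "dist r \<sigma> < \<delta>" using elim that by (auto simp: dist_real_def)
      then show ?thesis using d(2)[of r] by (simp add: dist_real_def)
    qed
    have le: "s1 x \<le> s2 x" using elim by simp
    have q: "\<bar>Qf K (s1 x) - Qf K (s2 x) - K \<sigma> * (s2 x - s1 x)\<bar> \<le> \<epsilon> / 2 * (s2 x - s1 x)"
      by (rule Q_diff_bound[OF iK le bd])
    have pos: "s2 x - s1 x > 0" using elim by simp
    have "(Qf K (s1 x) - Qf K (s2 x)) / (s2 x - s1 x) - K \<sigma>
        = (Qf K (s1 x) - Qf K (s2 x) - K \<sigma> * (s2 x - s1 x)) / (s2 x - s1 x)"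
      using pos by (simp add: field_simps)
    then have "\<bar>(Qf K (s1 x) - Qf K (s2 x)) / (s2 x - s1 x) - K \<sigma>\<bar>
        = \<bar>Qf K (s1 x) - Qf K (s2 x) - K \<sigma> * (s2 x - s1 x)\<bar> / (s2 x - s1 x)"
      using pos by simp
    also have "\<dots> \<le> \<epsilon> / 2" using q pos by (simp add: divide_le_eq)
    also have "\<dots> < \<epsilon>" using e by simp
    finally show ?case by (simp add: dist_real_def)
  qed
qed



theorem theorem5p1:
  fixes um vm up vp :: real
    and us vs :: "real \<Rightarrow> real \<Rightarrow> real"
    and \<phi> :: "real \<times> real \<Rightarrow> real"
  assumes "vm > 0" and "vp > 0" and "um > up"
    and sol: "\<forall>\<^sub>F e in at (0, 0) within {p :: real \<times> real. 0 < fst p \<and> 0 < snd p}.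
               two_shock_state (fst e) (snd e) um vm up vp (us (fst e) (snd e)) (vs (fst e) (snd e))"
    and phi: "test_fun_pos \<phi>"
  shows
    "(((\<lambda>e. integral\<^sup>L lborel (\<lambda>z.
         three_state um (us (fst e) (snd e)) up
           (shock1_speed (snd e) um vm (us (fst e) (snd e)) (vs (fst e) (snd e)))
           (shock2_speed (snd e) up vp (us (fst e) (snd e)) (vs (fst e) (snd e))) z * \<phi> z))
      \<longlongrightarrow> integral\<^sup>L lborel (\<lambda>z. (um + (up - um) * Heaviside (snd z - (um + up) / 2 * fst z)) * \<phi> z))
      (at (0, 0) within {p :: real \<times> real. 0 < fst p \<and> 0 < snd p})) \<and>
     (((\<lambda>e. integral\<^sup>L lborel (\<lambda>z.
         three_state vm (vs (fst e) (snd e)) vp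
           (shock1_speed (snd e) um vm (us (fst e) (snd e)) (vs (fst e) (snd e)))
           (shock2_speed (snd e) up vp (us (fst e) (snd e)) (vs (fst e) (snd e))) z * \<phi> z))
      \<longlongrightarrow> integral\<^sup>L lborel (\<lambda>z. (vm + (vp - vm) * Heaviside (snd z - (um + up) / 2 * fst z)) * \<phi> z)
          + (LINT t:{0<..}|lborel. (vm + vp) / 2 * (um - up) * t * \<phi> (t, (um + up) / 2 * t)))
      (at (0, 0) within {p :: real \<times> real. 0 < fst p \<and> 0 < snd p}))"
proof -
  let ?F = "at (0::real, 0::real) within {p :: real \<times> real. 0 < fst p \<and> 0 < snd p}"
  obtain T1 T2 X M where T1: "0 < T1" "T1 \<le> T2" and X: "0 \<le> X" and M: "0 \<le> M"
    and supp: "\<And>z. \<phi> z \<noteq> 0 \<Longrightarrow> T1 \<le> fst z \<and> fst z \<le> T2 \<and> \<bar>snd z\<bar> \<le> X"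
    and bd: "\<And>z. \<bar>\<phi> z\<bar> \<le> M" and cont: "continuous_on UNIV \<phi>"
    using test_fun_props[OF phi] by metis
  obtain CK where cK: "continuous_on UNIV (Kf \<phi>)" and iK: "integrable lborel (Kf \<phi>)"
    and bK: "\<And>r. \<bar>Kf \<phi> r\<bar> \<le> CK"
    using K_facts[OF T1 M supp bd cont] by metis
  define K where "K = Kf \<phi>"
  define T where "T = (\<integral>r. K r \<partial>lborel)"
  define \<sigma> where "\<sigma> = (um + up) / 2"
  define L where "L = (vm + vp) / 2 * (um - up)"
  define U where "U e = us (fst e) (snd e)" for e :: "real \<times> real"
  define V where "V e = vs (fst e) (snd e)" for e :: "real \<times> real"
  define s1 where "s1 e = shock1_speed (snd e) um vm (U e) (V e)" for e
  define s2 where "s2 e = shock2_speed (snd e) up vp (U e) (V e)" for e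
  have e1: "(fst \<longlongrightarrow> 0) ?F"
    using tendsto_fst[OF tendsto_ident_at[of "(0::real,0::real)"]] by simp
  have e2: "(snd \<longlongrightarrow> 0) ?F"
    using tendsto_snd[OF tendsto_ident_at[of "(0::real,0::real)"]] by simp
  have mem: "\<forall>\<^sub>F e in ?F. 0 < fst e \<and> 0 < snd e"
    by (auto simp: eventually_at_filter)
  have ev: "\<forall>\<^sub>F e in ?F. 0 < fst e \<and> 0 < snd e \<and> two_shock_state (fst e) (snd e) um vm up vp (U e) (V e)"
    using mem sol by eventually_elim (simp add: U_def V_def)
  note A = asym[OF assms(1,2,3) e1 e2 ev]
  have Ulim: "(U \<longlongrightarrow> \<sigma>) ?F" using A(1) by (simp add: \<sigma>_def)
  have s1lim: "(s1 \<longlongrightarrow> \<sigma>) ?F" using A(2) by (simp add: \<sigma>_def s1_def[abs_def])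
  have s2lim: "(s2 \<longlongrightarrow> \<sigma>) ?F" using A(3) by (simp add: \<sigma>_def s2_def[abs_def])
  have Llim: "((\<lambda>e. V e * (s2 e - s1 e)) \<longlongrightarrow> L) ?F" using A(4) by (simp add: L_def s1_def s2_def)
  have L0: "L > 0" unfolding L_def using assms(1,2,3) by simp
  have Vpos: "\<forall>\<^sub>F e in ?F. V e > 0"
    using ev by eventually_elim (use assms(1) in \<open>auto simp: two_shock_state_def\<close>)
  have lt: "\<forall>\<^sub>F e in ?F. s1 e < s2 e"
    using order_tendstoD(1)[OF Llim L0] Vpos
  proof eventually_elim
    case (elim e)
    then show ?case by (simp add: zero_less_mult_iff)
  qed
  have QS1: "((\<lambda>e. Qf K (s1 e)) \<longlongrightarrow> Qf K \<sigma>) ?F"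
    using Q_tendsto[OF iK bK s1lim] by (simp add: K_def)
  have QS2: "((\<lambda>e. Qf K (s2 e)) \<longlongrightarrow> Qf K \<sigma>) ?F"
    using Q_tendsto[OF iK bK s2lim] by (simp add: K_def)
  have Dq: "((\<lambda>e. (Qf K (s1 e) - Qf K (s2 e)) / (s2 e - s1 e)) \<longlongrightarrow> K \<sigma>) ?F"
    using Dq_lim[OF iK cK s1lim s2lim lt] by (simp add: K_def)
  have tgt_u: "(\<integral>z. (um + (up - um) * Heaviside (snd z - (um + up) / 2 * fst z)) * \<phi> z \<partial>lborel)
      = um * T + (up - um) * Qf K \<sigma>"
    using G2[OF T1 X M supp bd cont iK, of um up "(um + up) / 2"] by (simp add: K_def T_def \<sigma>_def)
  have tgt_v0: "(\<integral>z. (vm + (vp - vm) * Heaviside (snd z - (um + up) / 2 * fst z)) * \<phi> z \<partial>lborel)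
      = vm * T + (vp - vm) * Qf K \<sigma>"
    using G2[OF T1 X M supp bd cont iK, of vm vp "(um + up) / 2"] by (simp add: K_def T_def \<sigma>_def)
  have tgt_d: "(LINT t:{0<..}|lborel. (vm + vp) / 2 * (um - up) * t * \<phi> (t, (um + up) / 2 * t)) = L * K \<sigma>"
  proof -
    have "(LINT t:{0<..}|lborel. (vm + vp) / 2 * (um - up) * t * \<phi> (t, (um + up) / 2 * t))
        = (\<integral>t. L * (t * \<phi> (t, t * \<sigma>)) \<partial>lborel)"
      unfolding set_lebesgue_integral_def
    proof (rule Bochner_Integration.integral_cong[OF refl])
      fix t :: real
      show "indicator {0<..} t *\<^sub>R ((vm + vp) / 2 * (um - up) * t * \<phi> (t, (um + up) / 2 * t))
          = L * (t * \<phi> (t, t * \<sigma>))"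
      proof (cases "t > 0")
        case False
        then have "\<phi> (t, t * \<sigma>) = 0" using supp[of "(t, t * \<sigma>)"] T1 by auto
        then show ?thesis using False by (simp add: indicator_def)
      qed (simp add: L_def \<sigma>_def mult.commute)
    qed
    also have "\<dots> = L * K \<sigma>" by (simp add: K_def Kf_def)
    finally show ?thesis .
  qed
  have u_eq: "\<forall>\<^sub>F e in ?F.
      um * T + (U e - um) * Qf K (s1 e) + (up - U e) * Qf K (s2 e)
      = (\<integral>z. three_state um (us (fst e) (snd e)) up
           (shock1_speed (snd e) um vm (us (fst e) (snd e)) (vs (fst e) (snd e)))
           (shock2_speed (snd e) up vp (us (fst e) (snd e)) (vs (fst e) (snd e))) z * \<phi> z \<partial>lborel)"
    using lt
  proof eventually_elim
    case (elim e)
    show ?case using G1[OF T1 X M supp bd cont iK less_imp_le[OF elim], of um "U e" up]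
      by (simp add: K_def T_def U_def V_def s1_def s2_def)
  qed
  have v_eq: "\<forall>\<^sub>F e in ?F.
      vm * T - vm * Qf K (s1 e) + vp * Qf K (s2 e)
        + (V e * (s2 e - s1 e)) * ((Qf K (s1 e) - Qf K (s2 e)) / (s2 e - s1 e))
      = (\<integral>z. three_state vm (vs (fst e) (snd e)) vp
           (shock1_speed (snd e) um vm (us (fst e) (snd e)) (vs (fst e) (snd e)))
           (shock2_speed (snd e) up vp (us (fst e) (snd e)) (vs (fst e) (snd e))) z * \<phi> z \<partial>lborel)"
    using lt
  proof eventually_elim
    case (elim e)
    have ne: "s2 e - s1 e \<noteq> 0" using elim by simp
    have "vm * T - vm * Qf K (s1 e) + vp * Qf K (s2 e)
        + (V e * (s2 e - s1 e)) * ((Qf K (s1 e) - Qf K (s2 e)) / (s2 e - s1 e))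
        = vm * T + (V e - vm) * Qf K (s1 e) + (vp - V e) * Qf K (s2 e)"
      using ne by (simp add: field_simps)
    then show ?case using G1[OF T1 X M supp bd cont iK less_imp_le[OF elim], of vm "V e" vp]
      by (simp add: K_def T_def U_def V_def s1_def s2_def)
  qed
  have ulim: "((\<lambda>e. um * T + (U e - um) * Qf K (s1 e) + (up - U e) * Qf K (s2 e))
      \<longlongrightarrow> um * T + (up - um) * Qf K \<sigma>) ?F"
  proof -
    have "((\<lambda>e. um * T + (U e - um) * Qf K (s1 e) + (up - U e) * Qf K (s2 e))
      \<longlongrightarrow> um * T + (\<sigma> - um) * Qf K \<sigma> + (up - \<sigma>) * Qf K \<sigma>) ?F"
      by (intro tendsto_intros Ulim QS1 QS2)
    then show ?thesis by (rule tendsto_eq_rhs) (simp add: algebra_simps)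
  qed
  have vlim: "((\<lambda>e. vm * T - vm * Qf K (s1 e) + vp * Qf K (s2 e)
        + (V e * (s2 e - s1 e)) * ((Qf K (s1 e) - Qf K (s2 e)) / (s2 e - s1 e)))
      \<longlongrightarrow> vm * T + (vp - vm) * Qf K \<sigma> + L * K \<sigma>) ?F"
  proof -
    have "((\<lambda>e. vm * T - vm * Qf K (s1 e) + vp * Qf K (s2 e)
        + (V e * (s2 e - s1 e)) * ((Qf K (s1 e) - Qf K (s2 e)) / (s2 e - s1 e)))
      \<longlongrightarrow> vm * T - vm * Qf K \<sigma> + vp * Qf K \<sigma> + L * K \<sigma>) ?F"
      by (intro tendsto_intros QS1 QS2 Llim Dq)
    then show ?thesis by (rule tendsto_eq_rhs) (simp add: algebra_simps)
  qed
  show ?thesis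
  proof
    show "((\<lambda>e. integral\<^sup>L lborel (\<lambda>z.
         three_state um (us (fst e) (snd e)) up
           (shock1_speed (snd e) um vm (us (fst e) (snd e)) (vs (fst e) (snd e)))
           (shock2_speed (snd e) up vp (us (fst e) (snd e)) (vs (fst e) (snd e))) z * \<phi> z))
      \<longlongrightarrow> integral\<^sup>L lborel (\<lambda>z. (um + (up - um) * Heaviside (snd z - (um + up) / 2 * fst z)) * \<phi> z)) ?F"
      unfolding tgt_u by (rule Lim_transform_eventually[OF ulim u_eq])
    show "((\<lambda>e. integral\<^sup>L lborel (\<lambda>z.
         three_state vm (vs (fst e) (snd e)) vp
           (shock1_speed (snd e) um vm (us (fst e) (snd e)) (vs (fst e) (snd e)))
           (shock2_speed (snd e) up vp (us (fst e) (snd e)) (vs (fst e) (snd e))) z * \<phi> z))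
      \<longlongrightarrow> integral\<^sup>L lborel (\<lambda>z. (vm + (vp - vm) * Heaviside (snd z - (um + up) / 2 * fst z)) * \<phi> z)
          + (LINT t:{0<..}|lborel. (vm + vp) / 2 * (um - up) * t * \<phi> (t, (um + up) / 2 * t))) ?F"
      unfolding tgt_v0 tgt_d by (rule Lim_transform_eventually[OF vlim v_eq])
  qed
qed


end
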